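(* Let $n \ge 2$ be an integer, let $\mathcal{H}$ be a separable Hilbert space, and let $X \subset \mathcal{H}$ be a subset consisting of exactly $n$ points, equipped with the metric induced from $\mathcal{H}$. Then for every $0 < \alpha < 1$ the snowflake space $X^{\alpha}$ cannot be isometrically embedded into the Euclidean space $E^{n-2}$.
   Context: $E^k$ denotes the $k$-dimensional Euclidean space. For a metric space $(X,d)$ and $0<\alpha<1$, the snowflake space $X^{\alpha}$ is the set $X$ equipped with the metric $d^{\alpha}(x,y) = d(x,y)^{\alpha}$. *)

theory Defs
  imports "HOL-Analysis.Analysis"
begin

text \<open>Euclidean space E^k, represented explicitly (so that k may depend on n and k = 0
  is allowed): points are real sequences vanishing from index k on, with the
  standard Euclidean distance on the first k coordinates.\<close>

definition euclid_space :: "nat \<Rightarrow> (nat \<Rightarrow> real) set" where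
  "euclid_space k = {x. \<forall>i\<ge>k. x i = 0}"

definition euclid_dist :: "nat \<Rightarrow> (nat \<Rightarrow> real) \<Rightarrow> (nat \<Rightarrow> real) \<Rightarrow> real" where
  "euclid_dist k x y = sqrt (\<Sum>i<k. (x i - y i)^2)"

definition snowflake_isometric_embedding ::
  "real \<Rightarrow> 'a::metric_space set \<Rightarrow> nat \<Rightarrow> ('a \<Rightarrow> nat \<Rightarrow> real) \<Rightarrow> bool" where
  "snowflake_isometric_embedding \<alpha> X k f \<longleftrightarrow>
     f ` X \<subseteq> euclid_space k \<and>
     (\<forall>x\<in>X. \<forall>y\<in>X. euclid_dist k (f x) (f y) = dist x y powr \<alpha>)"

end

theory Submission
  imports Defs
begin

lemma hom_sol:
  fixes v :: "'i \<Rightarrow> nat \<Rightarrow> real"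
  assumes "finite I" "m < card I"
  shows "\<exists>c. (\<exists>i\<in>I. c i \<noteq> 0) \<and> (\<forall>l<m. (\<Sum>i\<in>I. c i * v i l) = 0)"
  using assms
proof (induction m arbitrary: I v)
  case 0
  then have "I \<noteq> {}" by auto
  then show ?case by (intro exI[of _ "\<lambda>_. 1"]) auto
next
  case (Suc m)
  show ?case
  proof (cases "\<forall>i\<in>I. v i m = 0")
    case True
    from Suc.IH[of I v] Suc.prems obtain c where c: "\<exists>i\<in>I. c i \<noteq> 0" "\<forall>l<m. (\<Sum>i\<in>I. c i * v i l) = 0"
      by auto
    have "\<forall>l<Suc m. (\<Sum>i\<in>I. c i * v i l) = 0"
    proof (intro allI impI)
      fix l assume "l < Suc m"
      then consider "l < m" | "l = m" by linarith
      then show "(\<Sum>i\<in>I. c i * v i l) = 0" using c True by cases auto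
    qed
    with c show ?thesis by blast
  next
    case False
    then obtain j where j: "j \<in> I" "v j m \<noteq> 0" by auto
    define I' where "I' = I - {j}"
    define w where "w i l = v i l - (v i m / v j m) * v j l" for i l
    have fin: "finite I'" and card: "m < card I'" using Suc.prems j by (auto simp: I'_def)
    from Suc.IH[OF fin card, of w] obtain d where d: "\<exists>i\<in>I'. d i \<noteq> 0" "\<forall>l<m. (\<Sum>i\<in>I'. d i * w i l) = 0"
      by auto
    define c where "c i = (if i = j then - (\<Sum>i\<in>I'. d i * v i m) / v j m else d i)" for i
    have key: "(\<Sum>i\<in>I. c i * v i l) = (\<Sum>i\<in>I'. d i * w i l)" for l
    proof -
      have 1: "(\<Sum>i\<in>I. c i * v i l) = c j * v j l + (\<Sum>i\<in>I'. c i * v i l)"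
        using Suc.prems(1) j by (simp add: I'_def sum.remove)
      have 2: "(\<Sum>i\<in>I'. c i * v i l) = (\<Sum>i\<in>I'. d i * v i l)"
        by (rule sum.cong) (auto simp: c_def I'_def)
      have 3: "(\<Sum>i\<in>I'. d i * w i l) = (\<Sum>i\<in>I'. d i * v i l - (d i * v i m) * (v j l / v j m))"
        by (rule sum.cong) (auto simp: w_def algebra_simps)
      have 4: "(\<Sum>i\<in>I'. d i * v i l - (d i * v i m) * (v j l / v j m)) = (\<Sum>i\<in>I'. d i * v i l) - (\<Sum>i\<in>I'. d i * v i m) * (v j l / v j m)"
        by (simp add: sum_subtractf sum_distrib_right sum_divide_distrib)
      show ?thesis unfolding 1 2 3 4 using j by (simp add: c_def algebra_simps)
    qed
    have "\<forall>l<Suc m. (\<Sum>i\<in>I. c i * v i l) = 0"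
    proof (intro allI impI)
      fix l assume "l < Suc m"
      then consider "l < m" | "l = m" by linarith
      then show "(\<Sum>i\<in>I. c i * v i l) = 0"
      proof cases
        case 1 then show ?thesis using key d by auto
      next
        case 2 then show ?thesis using key j by (simp add: w_def)
      qed
    qed
    moreover from d obtain i where "i \<in> I'" "d i \<noteq> 0" by auto
    then have "i \<in> I" "c i \<noteq> 0" by (auto simp: c_def I'_def)
    ultimately show ?thesis by blast
  qed
qed

lemma gs_exists:
  fixes S :: "'a::real_inner set"
  assumes "finite S"
  shows "\<exists>E. finite E \<and> 0 \<notin> E \<and> (\<forall>e\<in>E. \<forall>f\<in>E. e \<noteq> f \<longrightarrow> inner e f = 0) \<and> S \<subseteq> span E"
  using assms
proof (induction rule: finite_induct)
  case empty
  show ?case by (intro exI[of _ "{}"]) auto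
next
  case (insert a S)
  then obtain E where E: "finite E" "0 \<notin> E" "\<forall>e\<in>E. \<forall>f\<in>E. e \<noteq> f \<longrightarrow> inner e f = 0" "S \<subseteq> span E"
    by blast
  define a' where "a' = a - (\<Sum>e\<in>E. (inner e a / inner e e) *\<^sub>R e)"
  have sp: "(\<Sum>e\<in>E. (inner e a / inner e e) *\<^sub>R e) \<in> span E"
    by (intro span_sum span_scale span_base)
  have aeq: "a = a' + (\<Sum>e\<in>E. (inner e a / inner e e) *\<^sub>R e)" by (simp add: a'_def)
  show ?case
  proof (cases "a' = 0")
    case True
    then have "a \<in> span E" using aeq sp by simp
    then show ?thesis using E by blast
  next
    case False
    have orth: "inner a' f = 0" if f: "f \<in> E" for f
    proof -
      have ff: "inner f f \<noteq> 0" using E(2) f by auto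
      have "(\<Sum>e\<in>E. (inner e a / inner e e) * inner e f) = (inner f a / inner f f) * inner f f
             + (\<Sum>e\<in>E-{f}. (inner e a / inner e e) * inner e f)"
        using E(1) f by (simp add: sum.remove)
      also have "(\<Sum>e\<in>E-{f}. (inner e a / inner e e) * inner e f) = 0"
        using E(3) f by (intro sum.neutral) auto
      finally have "(\<Sum>e\<in>E. (inner e a / inner e e) * inner e f) = inner a f" using ff
        by (simp add: inner_commute)
      moreover have "inner a' f = inner a f - (\<Sum>e\<in>E. (inner e a / inner e e) * inner e f)"
        by (simp add: a'_def inner_diff_left inner_sum_left)
      ultimately show ?thesis by simp
    qed
    define E' where "E' = insert a' E"
    have "finite E'" "0 \<notin> E'" using E False by (auto simp: E'_def)
    moreover have "\<forall>e\<in>E'. \<forall>f\<in>E'. e \<noteq> f \<longrightarrow> inner e f = 0"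
      using E(3) orth by (auto simp: E'_def inner_commute)
    moreover have "span E \<subseteq> span E'" by (rule span_mono) (auto simp: E'_def)
    moreover have "a \<in> span E'"
    proof -
      have "a' \<in> span E'" by (rule span_base) (simp add: E'_def)
      moreover have "(\<Sum>e\<in>E. (inner e a / inner e e) *\<^sub>R e) \<in> span E'"
        using sp \<open>span E \<subseteq> span E'\<close> by blast
      ultimately show ?thesis using aeq by (metis span_add)
    qed
    ultimately have "finite E' \<and> 0 \<notin> E' \<and> (\<forall>e\<in>E'. \<forall>f\<in>E'. e \<noteq> f \<longrightarrow> inner e f = 0) \<and> insert a S \<subseteq> span E'"
      using E(4) by auto
    then show ?thesis by (rule exI)
  qed
qed

lemma inner_span_orth:
  fixes x y :: "'a::real_inner"
  assumes "finite E" "0 \<notin> E" "\<forall>e\<in>E. \<forall>f\<in>E. e \<noteq> f \<longrightarrow> inner e f = 0" "y \<in> span E"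
  shows "inner x y = (\<Sum>e\<in>E. inner x e * inner y e / inner e e)"
proof -
  from assms(4) obtain u where y: "y = (\<Sum>e\<in>E. u e *\<^sub>R e)"
    using span_finite[OF assms(1)] by auto
  have ye: "inner y e = u e * inner e e" if e: "e \<in> E" for e
  proof -
    have "inner y e = (\<Sum>f\<in>E. u f * inner f e)" by (simp add: y inner_sum_left)
    also have "\<dots> = u e * inner e e + (\<Sum>f\<in>E-{e}. u f * inner f e)"
      using assms(1) e by (simp add: sum.remove)
    also have "(\<Sum>f\<in>E-{e}. u f * inner f e) = 0"
      using assms(3) e by (intro sum.neutral) auto
    finally show ?thesis by simp
  qed
  have "inner x y = (\<Sum>e\<in>E. u e * inner x e)" by (simp add: y inner_sum_right)
  also have "\<dots> = (\<Sum>e\<in>E. inner x e * inner y e / inner e e)"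
  proof (rule sum.cong)
    fix e assume e: "e \<in> E"
    then have "inner e e \<noteq> 0" using assms(2) by auto
    then show "u e * inner x e = inner x e * inner y e / inner e e" using ye[OF e] by simp
  qed simp
  finally show ?thesis .
qed


primrec Phi :: "'i set \<Rightarrow> 'e set \<Rightarrow> ('e \<Rightarrow> 'i \<Rightarrow> real) \<Rightarrow> nat \<Rightarrow> ('i \<Rightarrow> real) \<Rightarrow> real" where
  "Phi I E z 0 b = (\<Sum>i\<in>I. b i)^2"
| "Phi I E z (Suc k) b = (\<Sum>e\<in>E. Phi I E z k (\<lambda>i. b i * z e i))"

lemma Phi_nonneg: "0 \<le> Phi I E z k b"
  by (induction k arbitrary: b) (auto intro: sum_nonneg)

lemma Phi_eq: "Phi I E z k b = (\<Sum>i\<in>I. \<Sum>j\<in>I. b i * b j * (\<Sum>e\<in>E. z e i * z e j)^k)"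
proof (induction k arbitrary: b)
  case 0
  show ?case by (simp add: power2_eq_square sum_product)
next
  case (Suc k)
  have "Phi I E z (Suc k) b = (\<Sum>e\<in>E. \<Sum>i\<in>I. \<Sum>j\<in>I. (b i * z e i) * (b j * z e j) * (\<Sum>e\<in>E. z e i * z e j)^k)"
    by (simp add: Suc.IH)
  also have "\<dots> = (\<Sum>i\<in>I. \<Sum>e\<in>E. \<Sum>j\<in>I. (b i * z e i) * (b j * z e j) * (\<Sum>e\<in>E. z e i * z e j)^k)"
    by (rule sum.swap)
  also have "\<dots> = (\<Sum>i\<in>I. \<Sum>j\<in>I. \<Sum>e\<in>E. (b i * z e i) * (b j * z e j) * (\<Sum>e\<in>E. z e i * z e j)^k)"
    by (intro sum.cong refl sum.swap)
  also have "\<dots> = (\<Sum>i\<in>I. \<Sum>j\<in>I. b i * b j * (\<Sum>e\<in>E. z e i * z e j)^Suc k)"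
  proof (intro sum.cong refl)
    fix i j
    show "(\<Sum>e\<in>E. (b i * z e i) * (b j * z e j) * (\<Sum>e\<in>E. z e i * z e j)^k) =
          b i * b j * (\<Sum>e\<in>E. z e i * z e j)^Suc k"
      by (simp add: sum_distrib_left sum_distrib_right mult_ac)
  qed
  finally show ?case .
qed

lemma Phi_scale: "Phi I E z k (\<lambda>i. a * u i) = a^2 * Phi I E z k u"
proof (induction k arbitrary: u)
  case 0
  show ?case by (simp add: sum_distrib_left[symmetric] power_mult_distrib)
next
  case (Suc k)
  have "Phi I E z (Suc k) (\<lambda>i. a * u i) = (\<Sum>e\<in>E. Phi I E z k (\<lambda>i. a * (u i * z e i)))"
    by (simp add: mult.assoc)
  also have "\<dots> = a^2 * Phi I E z (Suc k) u" by (simp add: Suc.IH sum_distrib_left)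
  finally show ?case .
qed

lemma Phi_add_zero:
  assumes "finite E"
  shows "Phi I E z k u = 0 \<Longrightarrow> Phi I E z k v = 0 \<Longrightarrow> Phi I E z k (\<lambda>i. u i + v i) = 0"
proof (induction k arbitrary: u v)
  case 0
  then show ?case by (simp add: sum.distrib)
next
  case (Suc k)
  have "\<forall>e\<in>E. Phi I E z k (\<lambda>i. u i * z e i) = 0"
    using Suc.prems(1) assms by (simp add: sum_nonneg_eq_0_iff Phi_nonneg)
  moreover have "\<forall>e\<in>E. Phi I E z k (\<lambda>i. v i * z e i) = 0"
    using Suc.prems(2) assms by (simp add: sum_nonneg_eq_0_iff Phi_nonneg)
  ultimately have "\<forall>e\<in>E. Phi I E z k (\<lambda>i. u i * z e i + v i * z e i) = 0"
    using Suc.IH by blast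
  then show ?case by (simp add: distrib_right)
qed

definition Wz :: "'i set \<Rightarrow> 'e set \<Rightarrow> ('e \<Rightarrow> 'i \<Rightarrow> real) \<Rightarrow> ('i \<Rightarrow> real) \<Rightarrow> bool" where
  "Wz I E z b \<longleftrightarrow> (\<forall>k. Phi I E z k b = 0)"

definition goodz :: "'i set \<Rightarrow> 'e set \<Rightarrow> ('e \<Rightarrow> 'i \<Rightarrow> real) \<Rightarrow> ('i \<Rightarrow> real) \<Rightarrow> bool" where
  "goodz I E z h \<longleftrightarrow> (\<forall>b. Wz I E z b \<longrightarrow> Wz I E z (\<lambda>i. b i * h i))"

lemma goodz_const: "goodz I E z (\<lambda>i. a)"
proof -
  have "Phi I E z k (\<lambda>i. b i * a) = a^2 * Phi I E z k b" for b k
    using Phi_scale[of I E z k a b] by (simp add: mult.commute)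
  then show ?thesis by (simp add: goodz_def Wz_def)
qed

lemma goodz_z:
  assumes "finite E" "e \<in> E"
  shows "goodz I E z (z e)"
  unfolding goodz_def Wz_def
proof (intro allI impI)
  fix b k assume "\<forall>k. Phi I E z k b = 0"
  then have "Phi I E z (Suc k) b = 0" by blast
  then show "Phi I E z k (\<lambda>i. b i * z e i) = 0"
    using assms by (simp add: sum_nonneg_eq_0_iff Phi_nonneg)
qed

lemma goodz_add:
  assumes "finite E" "goodz I E z h1" "goodz I E z h2"
  shows "goodz I E z (\<lambda>i. h1 i + h2 i)"
  unfolding goodz_def Wz_def
proof (intro allI impI)
  fix b k assume "\<forall>k. Phi I E z k b = 0"
  then have "Phi I E z k (\<lambda>i. b i * h1 i) = 0" "Phi I E z k (\<lambda>i. b i * h2 i) = 0"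
    using assms(2,3) unfolding goodz_def Wz_def by blast+
  then have "Phi I E z k (\<lambda>i. b i * h1 i + b i * h2 i) = 0"
    by (rule Phi_add_zero[OF assms(1)])
  then show "Phi I E z k (\<lambda>i. b i * (h1 i + h2 i)) = 0" by (simp add: distrib_left)
qed

lemma goodz_mult:
  assumes "goodz I E z h1" "goodz I E z h2"
  shows "goodz I E z (\<lambda>i. h1 i * h2 i)"
  unfolding goodz_def
proof (intro allI impI)
  fix b assume "Wz I E z b"
  then have "Wz I E z (\<lambda>i. b i * h1 i)" using assms(1) unfolding goodz_def by blast
  then have "Wz I E z (\<lambda>i. (b i * h1 i) * h2 i)" using assms(2) unfolding goodz_def by blast
  then show "Wz I E z (\<lambda>i. b i * (h1 i * h2 i))" by (simp add: mult.assoc)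
qed

lemma goodz_prod:
  assumes "finite F" "\<And>f. f \<in> F \<Longrightarrow> goodz I E z (g f)"
  shows "goodz I E z (\<lambda>i. \<Prod>f\<in>F. g f i)"
  using assms
proof (induction rule: finite_induct)
  case empty
  then show ?case using goodz_const[of I E z 1] by simp
next
  case (insert x F)
  have "goodz I E z (g x)" using insert.prems by blast
  moreover have "goodz I E z (\<lambda>i. \<Prod>f\<in>F. g f i)" using insert.IH insert.prems by blast
  ultimately have "goodz I E z (\<lambda>i. g x i * (\<Prod>f\<in>F. g f i))" by (rule goodz_mult)
  moreover have "(\<lambda>i. \<Prod>f\<in>insert x F. g f i) = (\<lambda>i. g x i * (\<Prod>f\<in>F. g f i))"
    using insert.hyps by simp
  ultimately show ?case by simp
qed

lemma Wz_zero:
  fixes z :: "'e \<Rightarrow> 'i \<Rightarrow> real"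
  assumes "finite I" "finite E" "\<And>i j. i \<in> I \<Longrightarrow> j \<in> I \<Longrightarrow> i \<noteq> j \<Longrightarrow> \<exists>e\<in>E. z e i \<noteq> z e j"
    and W: "Wz I E z b" and j: "j \<in> I"
  shows "b j = 0"
proof -
  define ee where "ee i = (SOME e. e \<in> E \<and> z e i \<noteq> z e j)" for i
  have ee: "ee i \<in> E \<and> z (ee i) i \<noteq> z (ee i) j" if "i \<in> I - {j}" for i
  proof -
    have "\<exists>e. e \<in> E \<and> z e i \<noteq> z e j" using assms(3)[of i j] that j by blast
    then show ?thesis unfolding ee_def by (rule someI_ex)
  qed
  define h where "h x = (\<Prod>i\<in>I-{j}. z (ee i) x - z (ee i) i)" for x
  have gf: "goodz I E z (\<lambda>x. z (ee i) x - z (ee i) i)" if i: "i \<in> I - {j}" for i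
  proof -
    have "goodz I E z (z (ee i))" using goodz_z[OF assms(2)] ee[OF i] by blast
    moreover have "goodz I E z (\<lambda>x. - z (ee i) i)" by (rule goodz_const)
    ultimately have "goodz I E z (\<lambda>x. z (ee i) x + - z (ee i) i)" by (rule goodz_add[OF assms(2)])
    then show ?thesis by simp
  qed
  have "goodz I E z (\<lambda>x. \<Prod>i\<in>I-{j}. z (ee i) x - z (ee i) i)"
    by (rule goodz_prod) (use assms(1) gf in auto)
  then have "goodz I E z h" unfolding h_def by simp
  then have "Wz I E z (\<lambda>i. b i * h i)" using W unfolding goodz_def by blast
  then have "Phi I E z 0 (\<lambda>i. b i * h i) = 0" unfolding Wz_def by blast
  then have s: "(\<Sum>i\<in>I. b i * h i) = 0" by simp
  have hz: "h i = 0" if "i \<in> I - {j}" for i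
    unfolding h_def using that assms(1) by (intro prod_zero) auto
  have nz: "\<forall>i\<in>I-{j}. z (ee i) j - z (ee i) i \<noteq> 0" using ee by force
  have hj: "h j \<noteq> 0"
    unfolding h_def using nz assms(1) by (simp add: prod_zero_iff)
  have "(\<Sum>i\<in>I. b i * h i) = b j * h j + (\<Sum>i\<in>I-{j}. b i * h i)"
    using assms(1) j by (simp add: sum.remove)
  also have "(\<Sum>i\<in>I-{j}. b i * h i) = 0" using hz by simp
  finally show ?thesis using s hj by simp
qed

lemma gauss_pd_coord:
  fixes z :: "'e \<Rightarrow> 'i \<Rightarrow> real"
  assumes "finite I" "finite E" "\<And>i j. i \<in> I \<Longrightarrow> j \<in> I \<Longrightarrow> i \<noteq> j \<Longrightarrow> \<exists>e\<in>E. z e i \<noteq> z e j"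
    and b: "\<exists>j\<in>I. b j \<noteq> 0" and s: "s > 0"
  shows "0 < (\<Sum>i\<in>I. \<Sum>j\<in>I. b i * b j * exp (2 * s * (\<Sum>e\<in>E. z e i * z e j)))"
proof -
  have "\<not> Wz I E z b"
  proof
    assume W: "Wz I E z b"
    from b obtain j where "j \<in> I" "b j \<noteq> 0" by blast
    moreover have "b j = 0" by (rule Wz_zero[OF assms(1) assms(2) assms(3) W \<open>j \<in> I\<close>])
    ultimately show False by simp
  qed
  then obtain k where k: "Phi I E z k b \<noteq> 0" unfolding Wz_def by blast
  define G where "G i j = (\<Sum>e\<in>E. z e i * z e j)" for i j
  have "(\<lambda>n. (2 * s)^n / fact n * Phi I E z n b) sums (\<Sum>i\<in>I. \<Sum>j\<in>I. b i * b j * exp (2 * s * G i j))"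
  proof -
    have "(\<lambda>n. \<Sum>i\<in>I. \<Sum>j\<in>I. b i * b j * ((2 * s * G i j)^n /\<^sub>R fact n)) sums (\<Sum>i\<in>I. \<Sum>j\<in>I. b i * b j * exp (2 * s * G i j))"
      by (intro sums_sum sums_mult exp_converges)
    moreover have "(\<Sum>i\<in>I. \<Sum>j\<in>I. b i * b j * ((2 * s * G i j)^n /\<^sub>R fact n)) = (2 * s)^n / fact n * Phi I E z n b" for n
    proof -
      have "Phi I E z n b = (\<Sum>i\<in>I. \<Sum>j\<in>I. b i * b j * G i j ^ n)" by (simp add: Phi_eq G_def)
      then show ?thesis by (simp add: sum_distrib_left power_mult_distrib divide_inverse mult_ac)
    qed
    ultimately show ?thesis by simp
  qed
  note S = this
  have "0 < suminf (\<lambda>n. (2 * s)^n / fact n * Phi I E z n b)"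
  proof (rule suminf_pos2)
    show "summable (\<lambda>n. (2 * s)^n / fact n * Phi I E z n b)" using S by (rule sums_summable)
    have p1: "0 < Phi I E z k b" using k Phi_nonneg[of I E z k b] by linarith
    have p2: "0 < (2 * s)^k / fact k" using s by simp
    show "0 < (2 * s)^k / fact k * Phi I E z k b" using p1 p2 by (rule mult_pos_pos[rotated])
    show "0 \<le> (2 * s)^n / fact n * Phi I E z n b" for n
    proof (rule mult_nonneg_nonneg)
      show "0 \<le> (2 * s)^n / fact n" using s by simp
    qed (rule Phi_nonneg)
  qed
  then have "0 < (\<Sum>i\<in>I. \<Sum>j\<in>I. b i * b j * exp (2 * s * G i j))"
    using sums_unique[OF S] by simp
  then show ?thesis by (simp add: G_def)
qed


definition hk :: "real \<Rightarrow> real \<Rightarrow> real \<Rightarrow> real" where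
  "hk \<alpha> t x = indicator {0<..} x * ((1 - exp (-(x*t))) * x powr (-1-\<alpha>))"

lemma hk1_integrable:
  assumes "0 < \<alpha>" "\<alpha> < 1"
  shows "integrable lebesgue (hk \<alpha> 1)"
proof -
  let ?f = "\<lambda>x::real. (1 - exp (-x)) * x powr (-1-\<alpha>)"
  have "set_integrable lebesgue ({0<..1} \<union> {1..}) ?f"
  proof (rule set_integrable_Un)
    show "set_integrable lebesgue {0<..1} ?f"
      unfolding set_integrable_def
    proof (rule Bochner_Integration.integrable_bound [OF _ _ AE_I2])
      show "integrable lebesgue (\<lambda>x. indicat_real {0<..1} x *\<^sub>R x powr (-\<alpha>))"
        using assms
        by (intro nonnegative_absolutely_integrable_1 [unfolded set_integrable_def] integrable_on_powr_from_0') auto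
      show "(\<lambda>x. indicat_real {0<..1} x *\<^sub>R ?f x) \<in> borel_measurable lebesgue"
        by (intro measurable_completion)
           (auto intro!: borel_measurable_continuous_on_indicator continuous_intros)
      fix x :: real
      show "norm (indicat_real {0<..1} x *\<^sub>R ?f x) \<le> norm (indicat_real {0<..1} x *\<^sub>R x powr (-\<alpha>))"
      proof (cases "x \<in> {0<..1}")
        case True
        then have x: "0 < x" "x \<le> 1" by auto
        have e1: "0 \<le> 1 - exp (-x)" using x by simp
        have e2: "1 - exp (-x) \<le> x" using exp_ge_add_one_self[of "-x"] by simp
        have "(1 - exp (-x)) * x powr (-1-\<alpha>) \<le> x * x powr (-1-\<alpha>)"
          by (rule mult_right_mono[OF e2]) simp
        also have "x * x powr (-1-\<alpha>) = x powr (-\<alpha>)"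
          using x by (simp add: powr_add[symmetric] powr_mult_base)
        finally show ?thesis using True e1 x by (simp add: abs_mult)
      qed simp
    qed
    show "set_integrable lebesgue {1..} ?f"
      unfolding set_integrable_def
    proof (rule Bochner_Integration.integrable_bound [OF _ _ AE_I2])
      have "(\<lambda>x. x powr (-1-\<alpha>)) integrable_on {1..}"
        using has_integral_powr_to_inf[of "-1-\<alpha>" 1] assms unfolding integrable_on_def by auto
      then show "integrable lebesgue (\<lambda>x. indicat_real {1..} x *\<^sub>R x powr (-1-\<alpha>))"
        by (intro nonnegative_absolutely_integrable_1 [unfolded set_integrable_def]) auto
      show "(\<lambda>x. indicat_real {1..} x *\<^sub>R ?f x) \<in> borel_measurable lebesgue"
        by (intro measurable_completion)
           (auto intro!: borel_measurable_continuous_on_indicator continuous_intros)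
      fix x :: real
      show "norm (indicat_real {1..} x *\<^sub>R ?f x) \<le> norm (indicat_real {1..} x *\<^sub>R x powr (-1-\<alpha>))"
      proof (cases "x \<in> {1..}")
        case True
        then have x: "1 \<le> x" by auto
        have e1: "0 \<le> 1 - exp (-x)" using x by simp
        have e2: "1 - exp (-x) \<le> 1" by simp
        have "(1 - exp (-x)) * x powr (-1-\<alpha>) \<le> 1 * x powr (-1-\<alpha>)"
          by (rule mult_right_mono[OF e2]) simp
        then show ?thesis using True e1 x by (simp add: abs_mult)
      qed simp
    qed
  qed auto
  moreover have "{0<..1} \<union> {1..} = {0::real<..}" by auto
  ultimately have "integrable lebesgue (\<lambda>x. indicat_real {0<..} x *\<^sub>R ?f x)"
    unfolding set_integrable_def by simp
  then show ?thesis unfolding hk_def by (simp add: fun_eq_iff)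
qed

lemma hk_scale:
  assumes "0 < \<alpha>" "\<alpha> < 1" "0 < t"
  shows "integrable lebesgue (hk \<alpha> t) \<and> integral\<^sup>L lebesgue (hk \<alpha> t) = t powr \<alpha> * integral\<^sup>L lebesgue (hk \<alpha> 1)"
proof -
  have eq: "hk \<alpha> t (0 + (1/t) * x) = t powr (1+\<alpha>) * hk \<alpha> 1 x" for x
  proof (cases "x > 0")
    case True
    have tt: "t powr (1+\<alpha>) * t powr (-1-\<alpha>) = 1" using assms by (simp add: powr_add[symmetric])
    have "(x/t) powr (-1-\<alpha>) = x powr (-1-\<alpha>) / t powr (-1-\<alpha>)"
      using True assms by (simp add: powr_divide)
    also have "\<dots> = t powr (1+\<alpha>) * x powr (-1-\<alpha>)"
      using tt assms by (simp add: divide_simps)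
    finally have "(x/t) powr (-1-\<alpha>) = t powr (1+\<alpha>) * x powr (-1-\<alpha>)" .
    then show ?thesis using True assms by (simp add: hk_def)
  next
    case False
    then show ?thesis using assms by (simp add: hk_def divide_simps)
  qed
  have c: "1/t \<noteq> 0" using assms by simp
  have "integrable lebesgue (\<lambda>x. hk \<alpha> t (0 + (1/t) * x))"
    unfolding eq using hk1_integrable[OF assms(1,2)] by simp
  then have int: "integrable lebesgue (hk \<alpha> t)"
    using lebesgue_integrable_real_affine_iff[OF c, of "hk \<alpha> t" 0] by simp
  have "integral\<^sup>L lebesgue (hk \<alpha> t) = \<bar>1/t\<bar> *\<^sub>R (\<integral>x. hk \<alpha> t (0 + (1/t) * x) \<partial>lebesgue)"
    by (rule lebesgue_integral_real_affine[OF c])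
  also have "\<dots> = (1/t) * (t powr (1+\<alpha>) * integral\<^sup>L lebesgue (hk \<alpha> 1))"
    using assms unfolding eq by simp
  also have "\<dots> = t powr \<alpha> * integral\<^sup>L lebesgue (hk \<alpha> 1)"
    using assms by (simp add: powr_add)
  finally show ?thesis using int by simp
qed

lemma pos_integral_pos:
  fixes f :: "real \<Rightarrow> real"
  assumes int: "integrable lebesgue f" and nn: "\<And>x. 0 \<le> f x" and pos: "\<And>x. 0 < x \<Longrightarrow> 0 < f x"
  shows "0 < integral\<^sup>L lebesgue f"
proof -
  have ge: "0 \<le> integral\<^sup>L lebesgue f" using nn by (simp add: integral_nonneg_AE)
  have "integral\<^sup>L lebesgue f \<noteq> 0"
  proof
    assume "integral\<^sup>L lebesgue f = 0"
    then have "AE x in lebesgue. f x = 0"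
      using integral_nonneg_eq_0_iff_AE[OF int] nn by simp
    then have "AE x in lebesgue. x \<notin> {0<..<1::real}"
      by (rule eventually_mono) (use pos in fastforce)
    then have "{0<..<1::real} \<in> null_sets lebesgue"
      by (subst AE_iff_null_sets) auto
    then have "{0<..<1::real} \<in> null_sets lborel"
      using null_sets_completion_iff[of "{0<..<1::real}" lborel] by simp
    then have "emeasure lborel {0<..<1::real} = 0" by auto
    then show False by simp
  qed
  with ge show ?thesis by simp
qed

lemma hk1_pos:
  assumes "0 < \<alpha>" "\<alpha> < 1"
  shows "0 < integral\<^sup>L lebesgue (hk \<alpha> 1)"
proof (rule pos_integral_pos[OF hk1_integrable[OF assms]])
  fix x :: real
  show "0 \<le> hk \<alpha> 1 x" by (simp add: hk_def indicator_def)
  assume "0 < x"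
  then show "0 < hk \<alpha> 1 x" by (simp add: hk_def)
qed

lemma hk_rep:
  assumes "0 < \<alpha>" "\<alpha> < 1" "0 \<le> t"
  shows "integrable lebesgue (hk \<alpha> t) \<and> t powr \<alpha> = integral\<^sup>L lebesgue (hk \<alpha> t) / integral\<^sup>L lebesgue (hk \<alpha> 1)"
proof (cases "t = 0")
  case True
  have "hk \<alpha> 0 = (\<lambda>_. 0)" by (simp add: hk_def fun_eq_iff)
  then show ?thesis using True by simp
next
  case False
  then show ?thesis using hk_scale[OF assms(1,2), of t] hk1_pos[OF assms(1,2)] assms(3) by simp
qed


lemma norm_diff_sq:
  fixes a b :: "'a::real_inner"
  shows "(norm (a - b))^2 = (norm a)^2 + (norm b)^2 - 2 * inner a b"
  by (simp add: power2_norm_eq_inner inner_diff_left inner_diff_right inner_commute)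

lemma gauss_pd:
  fixes p :: "'i \<Rightarrow> 'a::real_inner"
  assumes I: "finite I" and inj: "inj_on p I" and c: "\<exists>j\<in>I. c j \<noteq> 0" and s: "s > 0"
  shows "0 < (\<Sum>i\<in>I. \<Sum>j\<in>I. c i * c j * exp (-(s * (norm (p i - p j))^2)))"
proof -
  obtain E where E: "finite E" "0 \<notin> E" "\<forall>e\<in>E. \<forall>f\<in>E. e \<noteq> f \<longrightarrow> inner e f = 0" "p ` I \<subseteq> span E"
    using gs_exists[of "p ` I"] I by blast
  define z where "z e i = inner (p i) e / norm e" for e i
  have G: "inner (p i) (p j) = (\<Sum>e\<in>E. z e i * z e j)" if "i \<in> I" "j \<in> I" for i j
  proof -
    have "p j \<in> span E" using E(4) that by blast
    then have "inner (p i) (p j) = (\<Sum>e\<in>E. inner (p i) e * inner (p j) e / inner e e)"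
      by (rule inner_span_orth[OF E(1-3)])
    also have "\<dots> = (\<Sum>e\<in>E. z e i * z e j)"
    proof (rule sum.cong)
      fix e assume "e \<in> E"
      have "inner e e = norm e * norm e" by (simp add: power2_norm_eq_inner[symmetric] power2_eq_square)
      then show "inner (p i) e * inner (p j) e / inner e e = z e i * z e j"
        by (simp add: z_def)
    qed simp
    finally show ?thesis .
  qed
  have sep: "\<exists>e\<in>E. z e i \<noteq> z e j" if "i \<in> I" "j \<in> I" "i \<noteq> j" for i j
  proof (rule ccontr)
    assume "\<not> (\<exists>e\<in>E. z e i \<noteq> z e j)"
    then have zz: "\<forall>e\<in>E. z e i = z e j" by blast
    have "inner (p i) (p i) = inner (p i) (p j)" "inner (p j) (p j) = inner (p i) (p j)"
      using G[of i i] G[of i j] G[of j j] that zz by auto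
    then have "inner (p i - p j) (p i - p j) = 0"
      by (simp add: inner_diff_left inner_diff_right inner_commute)
    then have "p i = p j" by simp
    then show False using inj that by (auto dest: inj_onD)
  qed
  define b where "b i = c i * exp (-(s * (norm (p i))^2))" for i
  have b: "\<exists>j\<in>I. b j \<noteq> 0" using c by (auto simp: b_def)
  have "0 < (\<Sum>i\<in>I. \<Sum>j\<in>I. b i * b j * exp (2 * s * (\<Sum>e\<in>E. z e i * z e j)))"
    by (rule gauss_pd_coord[OF I E(1) sep b s])
  also have "\<dots> = (\<Sum>i\<in>I. \<Sum>j\<in>I. c i * c j * exp (-(s * (norm (p i - p j))^2)))"
  proof (intro sum.cong refl)
    fix i j assume ij: "i \<in> I" "j \<in> I"
    have "exp (-(s * (norm (p i - p j))^2)) =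
          exp (-(s * (norm (p i))^2)) * exp (-(s * (norm (p j))^2)) * exp (2 * s * inner (p i) (p j))"
      unfolding norm_diff_sq exp_add[symmetric] by (simp add: algebra_simps)
    then show "b i * b j * exp (2 * s * (\<Sum>e\<in>E. z e i * z e j)) = c i * c j * exp (-(s * (norm (p i - p j))^2))"
      using G[OF ij] by (simp add: b_def mult_ac)
  qed
  finally show ?thesis .
qed

lemma cnd_strict:
  fixes p :: "'i \<Rightarrow> 'a::real_inner"
  assumes I: "finite I" and inj: "inj_on p I" and c: "\<exists>j\<in>I. c j \<noteq> 0" and c0: "(\<Sum>i\<in>I. c i) = 0"
    and a: "0 < \<alpha>" "\<alpha> < 1"
  shows "(\<Sum>i\<in>I. \<Sum>j\<in>I. c i * c j * ((norm (p i - p j))^2) powr \<alpha>) < 0"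
proof -
  define t where "t i j = (norm (p i - p j))^2" for i j
  define K where "K = integral\<^sup>L lebesgue (hk \<alpha> 1)"
  have K: "0 < K" unfolding K_def by (rule hk1_pos[OF a])
  have intt: "integrable lebesgue (hk \<alpha> (t i j))" for i j
    using hk_rep[OF a, of "t i j"] by (simp add: t_def)
  have rep: "t i j powr \<alpha> = integral\<^sup>L lebesgue (hk \<alpha> (t i j)) / K" for i j
    using hk_rep[OF a, of "t i j"] by (simp add: t_def K_def)
  define F where "F x = (\<Sum>i\<in>I. \<Sum>j\<in>I. c i * c j * hk \<alpha> (t i j) x)" for x
  have intF: "integrable lebesgue F" unfolding F_def using intt by simp
  have "(\<Sum>i\<in>I. \<Sum>j\<in>I. c i * c j * t i j powr \<alpha>) = (\<Sum>i\<in>I. \<Sum>j\<in>I. c i * c j * integral\<^sup>L lebesgue (hk \<alpha> (t i j))) / K"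
    by (simp add: rep sum_divide_distrib)
  also have "(\<Sum>i\<in>I. \<Sum>j\<in>I. c i * c j * integral\<^sup>L lebesgue (hk \<alpha> (t i j))) = integral\<^sup>L lebesgue F"
    unfolding F_def using intt by (simp add: integral_sum)
  finally have eq: "(\<Sum>i\<in>I. \<Sum>j\<in>I. c i * c j * t i j powr \<alpha>) = integral\<^sup>L lebesgue F / K" .
  define \<psi> where "\<psi> x = - F x" for x
  have intpsi: "integrable lebesgue \<psi>" unfolding \<psi>_def using intF by simp
  have cc: "(\<Sum>i\<in>I. \<Sum>j\<in>I. c i * c j) = 0"
    using c0 by (simp add: sum_product[symmetric])
  have psi_eq: "\<psi> x = indicator {0<..} x * ((\<Sum>i\<in>I. \<Sum>j\<in>I. c i * c j * exp (-(x * t i j))) * x powr (-1-\<alpha>))" for x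
  proof -
    have "F x = indicator {0<..} x * ((\<Sum>i\<in>I. \<Sum>j\<in>I. c i * c j * (1 - exp (-(x * t i j)))) * x powr (-1-\<alpha>))"
      unfolding F_def hk_def by (simp add: sum_distrib_left sum_distrib_right mult_ac)
    also have "(\<Sum>i\<in>I. \<Sum>j\<in>I. c i * c j * (1 - exp (-(x * t i j)))) =
               (\<Sum>i\<in>I. \<Sum>j\<in>I. c i * c j) - (\<Sum>i\<in>I. \<Sum>j\<in>I. c i * c j * exp (-(x * t i j)))"
      by (simp add: right_diff_distrib sum_subtractf)
    finally show ?thesis unfolding \<psi>_def cc by simp
  qed
  have pos: "0 < \<psi> x" if "0 < x" for x
  proof -
    have "0 < (\<Sum>i\<in>I. \<Sum>j\<in>I. c i * c j * exp (-(x * (norm (p i - p j))^2)))"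
      by (rule gauss_pd[OF I inj c that])
    then show ?thesis using that unfolding psi_eq t_def by simp
  qed
  have nn: "0 \<le> \<psi> x" for x
    using pos[of x] by (cases "0 < x") (auto simp: psi_eq)
  have "0 < integral\<^sup>L lebesgue \<psi>" by (rule pos_integral_pos[OF intpsi nn pos])
  then have "integral\<^sup>L lebesgue F < 0" unfolding \<psi>_def by simp
  then have "integral\<^sup>L lebesgue F / K < 0" using K by (simp add: divide_neg_pos)
  then show ?thesis using eq by (simp add: t_def)
qed

lemma quad_expand:
  fixes c a :: "'i \<Rightarrow> real"
  shows "(\<Sum>i\<in>I. \<Sum>j\<in>I. c i * c j * (a i - a j)^2) =
         2 * (\<Sum>i\<in>I. c i) * (\<Sum>i\<in>I. c i * (a i)^2) - 2 * (\<Sum>i\<in>I. c i * a i)^2"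
proof -
  have "(\<Sum>i\<in>I. \<Sum>j\<in>I. c i * c j * (a i - a j)^2) =
        (\<Sum>i\<in>I. \<Sum>j\<in>I. (c i * (a i)^2) * c j + c i * (c j * (a j)^2) - 2 * ((c i * a i) * (c j * a j)))"
    by (intro sum.cong refl) (simp add: power2_eq_square algebra_simps)
  also have "\<dots> = (\<Sum>i\<in>I. \<Sum>j\<in>I. (c i * (a i)^2) * c j) + (\<Sum>i\<in>I. \<Sum>j\<in>I. c i * (c j * (a j)^2))
                 - (\<Sum>i\<in>I. \<Sum>j\<in>I. 2 * ((c i * a i) * (c j * a j)))"
    by (simp add: sum.distrib sum_subtractf)
  also have "(\<Sum>i\<in>I. \<Sum>j\<in>I. (c i * (a i)^2) * c j) = (\<Sum>i\<in>I. c i * (a i)^2) * (\<Sum>j\<in>I. c j)"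
    by (simp add: sum_product)
  also have "(\<Sum>i\<in>I. \<Sum>j\<in>I. c i * (c j * (a j)^2)) = (\<Sum>i\<in>I. c i) * (\<Sum>j\<in>I. c j * (a j)^2)"
    by (simp add: sum_product)
  also have "(\<Sum>i\<in>I. \<Sum>j\<in>I. 2 * ((c i * a i) * (c j * a j))) = 2 * ((\<Sum>i\<in>I. c i * a i) * (\<Sum>j\<in>I. c j * a j))"
  proof -
    have p: "(\<Sum>i\<in>I. c i * a i) * (\<Sum>j\<in>I. c j * a j) = (\<Sum>i\<in>I. \<Sum>j\<in>I. (c i * a i) * (c j * a j))"
      by (rule sum_product)
    show ?thesis unfolding p by (simp add: sum_distrib_left)
  qed
  finally show ?thesis by (simp add: power2_eq_square algebra_simps)
qed

lemma powr_sq: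
  fixes a :: real
  assumes "0 \<le> a"
  shows "(a powr \<alpha>)^2 = (a^2) powr \<alpha>"
proof (cases "a = 0")
  case True then show ?thesis by simp
next
  case False
  with assms have "a > 0" by simp
  then show ?thesis
    by (simp add: power2_eq_square powr_mult)
qed

theorem theorem1:
  fixes X :: "'a::{real_inner, complete_space} set" and n :: nat and \<alpha> :: real
  assumes "n \<ge> 2"
    and "separable_space (euclidean :: 'a topology)"
    and "finite X" and "card X = n"
    and "0 < \<alpha>" and "\<alpha> < 1"
  shows "\<not> (\<exists>f. snowflake_isometric_embedding \<alpha> X (n - 2) f)"
proof
  assume "\<exists>f. snowflake_isometric_embedding \<alpha> X (n - 2) f"
  then obtain f where f: "\<forall>x\<in>X. \<forall>y\<in>X. euclid_dist (n-2) (f x) (f y) = dist x y powr \<alpha>"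
    unfolding snowflake_isometric_embedding_def by blast
  obtain x where x: "bij_betw x {0..<n} X"
    using ex_bij_betw_nat_finite[OF assms(3)] assms(4) by blast
  define I where "I = {0..<n}"
  have I: "finite I" "card I = n" by (auto simp: I_def)
  have inj: "inj_on x I" using x by (simp add: I_def bij_betw_def)
  have xX: "x i \<in> X" if "i \<in> I" for i using x that by (auto simp: I_def bij_betw_def)
  define y where "y i = f (x i)" for i
  define v where "v i l = (if l = 0 then 1 else y i (l - 1))" for i l
  have "n - 1 < card I" using I assms(1) by simp
  then obtain c where c: "\<exists>i\<in>I. c i \<noteq> 0" and cv: "\<forall>l<n-1. (\<Sum>i\<in>I. c i * v i l) = 0"
    using hom_sol[OF I(1), of "n - 1" v] by blast
  have c0: "(\<Sum>i\<in>I. c i) = 0" using cv[rule_format, of 0] assms(1) by (simp add: v_def)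
  have cy: "(\<Sum>i\<in>I. c i * y i l) = 0" if "l < n - 2" for l
    using cv[rule_format, of "Suc l"] that by (simp add: v_def)
  have dsq: "(norm (x i - x j)^2) powr \<alpha> = (\<Sum>l<n-2. (y i l - y j l)^2)" if "i \<in> I" "j \<in> I" for i j
  proof -
    have "euclid_dist (n-2) (y i) (y j) = dist (x i) (x j) powr \<alpha>"
      using f xX that by (simp add: y_def)
    then have "(euclid_dist (n-2) (y i) (y j))^2 = (dist (x i) (x j) powr \<alpha>)^2" by simp
    also have "\<dots> = (norm (x i - x j)^2) powr \<alpha>" by (simp add: powr_sq dist_norm)
    finally show ?thesis
      unfolding euclid_dist_def by (simp add: sum_nonneg)
  qed
  have "(\<Sum>i\<in>I. \<Sum>j\<in>I. c i * c j * (norm (x i - x j)^2) powr \<alpha>) =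
        (\<Sum>i\<in>I. \<Sum>j\<in>I. c i * c j * (\<Sum>l<n-2. (y i l - y j l)^2))"
    by (intro sum.cong refl) (simp add: dsq)
  also have "\<dots> = (\<Sum>i\<in>I. \<Sum>j\<in>I. \<Sum>l<n-2. c i * c j * (y i l - y j l)^2)"
    by (simp add: sum_distrib_left)
  also have "\<dots> = (\<Sum>i\<in>I. \<Sum>l<n-2. \<Sum>j\<in>I. c i * c j * (y i l - y j l)^2)"
    by (rule sum.cong[OF refl], rule sum.swap)
  also have "\<dots> = (\<Sum>l<n-2. \<Sum>i\<in>I. \<Sum>j\<in>I. c i * c j * (y i l - y j l)^2)"
    by (rule sum.swap)
  also have "\<dots> = 0"
  proof (rule sum.neutral, intro ballI)
    fix l assume "l \<in> {..<n-2}"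
    then show "(\<Sum>i\<in>I. \<Sum>j\<in>I. c i * c j * (y i l - y j l)^2) = 0"
      unfolding quad_expand using c0 cy[of l] by simp
  qed
  finally have "(\<Sum>i\<in>I. \<Sum>j\<in>I. c i * c j * (norm (x i - x j)^2) powr \<alpha>) = 0" .
  moreover have "(\<Sum>i\<in>I. \<Sum>j\<in>I. c i * c j * (norm (x i - x j)^2) powr \<alpha>) < 0"
    by (rule cnd_strict[OF I(1) inj c c0 assms(5,6)])
  ultimately show False by simp
qed

end
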